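(* Let $\mathbf{P}=(X,P)$ be a finite interval order with no duplicated holdings, and let $\mathbf{I}$ be a distinguishing interval representation of $\mathbf{P}$, assigning to each $x\in X$ the interval $[l_x,r_x]$. Then for every linear extension $L$ of $P$ there exists a choice function $f$ on $\mathbf{I}$ such that $L(f)=L$.
   Context: An interval representation of a poset $(X,P)$ assigns to each $x\in X$ a closed real interval $[l_x,r_x]$ (lengths may be $0$) such that $x<y$ in $P$ iff $r_x<l_y$; $(X,P)$ is an interval order if it has one. $\mathbf{P}$ has no duplicated holdings if no two distinct elements can be assigned the same interval. A representation is distinguishing if no two intervals share an endpoint (every real number occurs at most once as an endpoint). A linear extension of $P$ is a linear order $L$ on $X$ with $P\subseteq L$. A choice function on the representation $\mathbf{I}$ is an injection $f:X\to\mathbb{R}$ with $l_x\le f(x)\le r_x$ for all $x$; $L(f)$ is the linear order on $X$ with $x<y$ in $L(f)$ iff $f(x)<f(y)$. *)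

theory Defs
  imports Complex_Main
begin

definition strict_poset :: "'a set \<Rightarrow> ('a \<times> 'a) set \<Rightarrow> bool" where
  "strict_poset X P \<longleftrightarrow> P \<subseteq> X \<times> X \<and> (\<forall>x\<in>X. (x, x) \<notin> P)
     \<and> (\<forall>x\<in>X. \<forall>y\<in>X. \<forall>z\<in>X. (x, y) \<in> P \<longrightarrow> (y, z) \<in> P \<longrightarrow> (x, z) \<in> P)"

definition interval_rep :: "'a set \<Rightarrow> ('a \<times> 'a) set \<Rightarrow> ('a \<Rightarrow> real) \<Rightarrow> ('a \<Rightarrow> real) \<Rightarrow> bool" where
  "interval_rep X P l r \<longleftrightarrow> (\<forall>x\<in>X. l x \<le> r x)
     \<and> (\<forall>x\<in>X. \<forall>y\<in>X. (x, y) \<in> P \<longleftrightarrow> r x < l y)"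

definition interval_order :: "'a set \<Rightarrow> ('a \<times> 'a) set \<Rightarrow> bool" where
  "interval_order X P \<longleftrightarrow> strict_poset X P \<and> (\<exists>l r. interval_rep X P l r)"

definition no_duplicated_holdings :: "'a set \<Rightarrow> ('a \<times> 'a) set \<Rightarrow> bool" where
  "no_duplicated_holdings X P \<longleftrightarrow>
     (\<forall>x\<in>X. \<forall>y\<in>X. x \<noteq> y \<longrightarrow>
        \<not> (\<exists>l r. interval_rep X P l r \<and> l x = l y \<and> r x = r y))"

definition distinguishing :: "'a set \<Rightarrow> ('a \<Rightarrow> real) \<Rightarrow> ('a \<Rightarrow> real) \<Rightarrow> bool" where
  "distinguishing X l r \<longleftrightarrow>
     (\<forall>x\<in>X. \<forall>y\<in>X. x \<noteq> y \<longrightarrow> {l x, r x} \<inter> {l y, r y} = {})"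

definition linear_extension :: "'a set \<Rightarrow> ('a \<times> 'a) set \<Rightarrow> ('a \<times> 'a) set \<Rightarrow> bool" where
  "linear_extension X P L \<longleftrightarrow> strict_poset X L
     \<and> (\<forall>x\<in>X. \<forall>y\<in>X. x \<noteq> y \<longrightarrow> (x, y) \<in> L \<or> (y, x) \<in> L) \<and> P \<subseteq> L"

definition choice_function :: "'a set \<Rightarrow> ('a \<Rightarrow> real) \<Rightarrow> ('a \<Rightarrow> real) \<Rightarrow> ('a \<Rightarrow> real) \<Rightarrow> bool" where
  "choice_function X l r f \<longleftrightarrow> inj_on f X \<and> (\<forall>x\<in>X. l x \<le> f x \<and> f x \<le> r x)"

definition order_of :: "'a set \<Rightarrow> ('a \<Rightarrow> real) \<Rightarrow> ('a \<times> 'a) set" where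
  "order_of X f = {(x, y). x \<in> X \<and> y \<in> X \<and> f x < f y}"

end

theory Submission
  imports Defs
begin

lemma ex_max:
  assumes "finite A" "A \<noteq> {}" "A \<subseteq> X"
    and tr: "\<forall>x\<in>X. \<forall>y\<in>X. \<forall>z\<in>X. (x, y) \<in> L \<longrightarrow> (y, z) \<in> L \<longrightarrow> (x, z) \<in> L"
    and tot: "\<forall>x\<in>X. \<forall>y\<in>X. x \<noteq> y \<longrightarrow> (x, y) \<in> L \<or> (y, x) \<in> L"
  shows "\<exists>m\<in>A. \<forall>y\<in>A. y \<noteq> m \<longrightarrow> (y, m) \<in> L"
  using assms(1,2,3)
proof (induction A rule: finite_ne_induct)
  case (singleton x)
  then show ?case by auto
next
  case (insert x F)
  then obtain m where m: "m \<in> F" "\<forall>y\<in>F. y \<noteq> m \<longrightarrow> (y, m) \<in> L" by auto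
  show ?case
  proof (cases "(m, x) \<in> L")
    case True
    have "\<forall>y\<in>insert x F. y \<noteq> x \<longrightarrow> (y, x) \<in> L"
    proof (intro ballI impI)
      fix y assume y: "y \<in> insert x F" "y \<noteq> x"
      then have "y \<in> F" by auto
      show "(y, x) \<in> L"
      proof (cases "y = m")
        case True then show ?thesis using \<open>(m, x) \<in> L\<close> by simp
      next
        case False
        then have "(y, m) \<in> L" using m \<open>y \<in> F\<close> by auto
        then show ?thesis using tr True insert.prems \<open>y \<in> F\<close> m(1) by blast
      qed
    qed
    then show ?thesis by auto
  next
    case False
    have "x \<noteq> m" using insert.hyps m(1) by auto
    then have "(x, m) \<in> L" using tot False insert.prems m(1) by blast
    then show ?thesis using m by auto
  qed
qed

lemma main:
  fixes X :: "'a set" and L and l r :: "'a \<Rightarrow> real"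
  assumes "finite X" "\<forall>x\<in>X. l x \<le> r x" "\<forall>x\<in>X. \<forall>y\<in>X. x \<noteq> y \<longrightarrow> l x \<noteq> r y"
   "L \<subseteq> X \<times> X" "\<forall>x\<in>X. (x,x) \<notin> L"
   "\<forall>x\<in>X. \<forall>y\<in>X. \<forall>z\<in>X. (x,y)\<in>L \<longrightarrow> (y,z)\<in>L \<longrightarrow> (x,z)\<in>L"
   "\<forall>x\<in>X. \<forall>y\<in>X. x\<noteq>y \<longrightarrow> (x,y)\<in>L \<or> (y,x)\<in>L"
   "\<forall>x\<in>X. \<forall>y\<in>X. r x < l y \<longrightarrow> (x,y)\<in>L"
   "\<forall>x\<in>X. l x < c"
  shows "\<exists>f. (\<forall>x\<in>X. l x \<le> f x \<and> f x \<le> r x \<and> f x < c) \<and> order_of X f = L"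
  using assms
proof (induction X arbitrary: L c rule: finite_psubset_induct)
  case (psubset X)
  show ?case
  proof (cases "X = {}")
    case True then have "L = {}" using psubset.prems(3) by auto
    then show ?thesis using True by (auto simp: order_of_def)
  next
    case False
    obtain m where m: "m \<in> X" "\<forall>y\<in>X. y\<noteq>m \<longrightarrow> (y,m)\<in>L"
      using ex_max[of X X L] psubset.hyps psubset.prems(5,6) False by blast
    define X' where "X' = X - {m}"
    define L' where "L' = L \<inter> (X' \<times> X')"
    define c' where "c' = min c (r m)"
    have lx: "l x < c'" if "x \<in> X'" for x
    proof -
      have x: "x \<in> X" "x \<noteq> m" using that X'_def by auto
      have "(x, m) \<in> L" using m x by auto
      then have "(m, x) \<notin> L" using psubset.prems(4,5) m(1) x by blast
      then have "l x \<le> r m" using psubset.prems(7) m(1) x(1) by force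
      moreover have "l x \<noteq> r m" using psubset.prems(2) m(1) x by blast
      ultimately show ?thesis using psubset.prems(8) x c'_def by auto
    qed
    have "\<exists>f. (\<forall>x\<in>X'. l x \<le> f x \<and> f x \<le> r x \<and> f x < c') \<and> order_of X' f = L'"
    proof (rule psubset.IH)
      show "X' \<subset> X" using m(1) X'_def by auto
      show "\<forall>x\<in>X'. l x \<le> r x" using psubset.prems(1) unfolding X'_def by blast
      show "\<forall>x\<in>X'. \<forall>y\<in>X'. x \<noteq> y \<longrightarrow> l x \<noteq> r y" using psubset.prems(2) unfolding X'_def by blast
      show "L' \<subseteq> X' \<times> X'" unfolding L'_def by blast
      show "\<forall>x\<in>X'. (x, x) \<notin> L'" using psubset.prems(4) unfolding L'_def X'_def by blast
      show "\<forall>x\<in>X'. \<forall>y\<in>X'. \<forall>z\<in>X'. (x,y)\<in>L' \<longrightarrow> (y,z)\<in>L' \<longrightarrow> (x,z)\<in>L'"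
        using psubset.prems(5) unfolding L'_def X'_def by blast
      show "\<forall>x\<in>X'. \<forall>y\<in>X'. x\<noteq>y \<longrightarrow> (x,y)\<in>L' \<or> (y,x)\<in>L'"
        using psubset.prems(6) unfolding L'_def X'_def by blast
      show "\<forall>x\<in>X'. \<forall>y\<in>X'. r x < l y \<longrightarrow> (x,y)\<in>L'"
        using psubset.prems(7) unfolding L'_def X'_def by blast
      show "\<forall>x\<in>X'. l x < c'" using lx by blast
    qed
    then obtain g where g: "\<forall>x\<in>X'. l x \<le> g x \<and> g x \<le> r x \<and> g x < c'" "order_of X' g = L'"
      by blast
    define M where "M = Max (insert (l m - 1) (g ` X'))"
    have finX': "finite X'" using psubset.hyps X'_def by auto
    have gM: "g x \<le> M" if "x \<in> X'" for x
      unfolding M_def using finX' that by (intro Max_ge) auto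
    have Mc: "M < c'"
    proof -
      have "M \<in> insert (l m - 1) (g ` X')" unfolding M_def using finX' by (intro Max_in) auto
      moreover have "l m - 1 < c'" using c'_def psubset.prems(1,8) m(1) by force
      ultimately show ?thesis using g(1) by auto
    qed
    define v where "v = max (l m) ((M + c')/2)"
    define f where "f = g(m := v)"
    have fX': "f x = g x" if "x \<in> X'" for x using that X'_def f_def by auto
    have fm: "f m = v" using f_def by simp
    have vge: "(M + c')/2 \<le> v" unfolding v_def by simp
    have vgt: "g x < v" if "x \<in> X'" for x 
    proof -
      have h: "M < (M + c')/2" using Mc by (simp add: field_simps)
      show ?thesis using gM[OF that] h vge by (meson le_less_trans less_le_trans)
    qed
    have vb: "l m \<le> v \<and> v \<le> r m \<and> v < c"
      using Mc c'_def v_def psubset.prems(1,8) m(1) by auto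
    have bounds: "\<forall>x\<in>X. l x \<le> f x \<and> f x \<le> r x \<and> f x < c"
    proof
      fix x assume "x \<in> X"
      show "l x \<le> f x \<and> f x \<le> r x \<and> f x < c"
      proof (cases "x = m")
        case True then show ?thesis using fm vb by simp
      next
        case False
        then have "x \<in> X'" using \<open>x \<in> X\<close> X'_def by auto
        then show ?thesis using fX' g(1) c'_def by fastforce
      qed
    qed
    have ord: "order_of X f = L"
    proof (intro set_eqI iffI)
      fix p assume p: "p \<in> order_of X f"
      obtain x y where xy: "p = (x, y)" "x \<in> X" "y \<in> X" "f x < f y"
        using p unfolding order_of_def by auto
      show "p \<in> L"
      proof (cases "y = m")
        case True
        then have "x \<noteq> m" using xy by auto
        then show ?thesis using m xy True by auto
      next
        case False
        then have y': "y \<in> X'" using xy X'_def by auto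
        show ?thesis
        proof (cases "x = m")
          case True
          then have "f y < f x" using vgt[OF y'] fX'[OF y'] fm by simp
          then show ?thesis using xy by simp
        next
          case False
          then have x': "x \<in> X'" using xy X'_def by auto
          have "(x, y) \<in> order_of X' g" using xy x' y' fX' unfolding order_of_def by auto
          then show ?thesis using g(2) L'_def xy by auto
        qed
      qed
    next
      fix p assume p: "p \<in> L"
      obtain x y where xy: "p = (x, y)" "x \<in> X" "y \<in> X" "(x, y) \<in> L"
        using p psubset.prems(3) by auto
      show "p \<in> order_of X f"
      proof (cases "y = m")
        case True
        then have "x \<noteq> m" using xy psubset.prems(4) by auto
        then have x': "x \<in> X'" using xy X'_def by auto
        show ?thesis using vgt[OF x'] fX'[OF x'] fm True xy unfolding order_of_def by auto
      next
        case False
        then have y': "y \<in> X'" using xy X'_def by auto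
        show ?thesis
        proof (cases "x = m")
          case True
          have "(y, m) \<in> L" using m False xy by auto
          then have "(m, m) \<in> L" using psubset.prems(5) xy True m(1) by blast
          then show ?thesis using psubset.prems(4) m(1) by auto
        next
          case False
          then have x': "x \<in> X'" using xy X'_def by auto
          have "(x, y) \<in> L'" using xy x' y' L'_def by auto
          then have "g x < g y" using g(2) unfolding order_of_def by auto
          then show ?thesis using xy fX' x' y' unfolding order_of_def by auto
        qed
      qed
    qed
    show ?thesis using bounds ord by blast
  qed
qed

theorem theorem4p3:
  fixes X :: "'a set" and P :: "('a \<times> 'a) set" and l r :: "'a \<Rightarrow> real"
  assumes "finite X"
    and "interval_order X P"
    and "no_duplicated_holdings X P"
    and "interval_rep X P l r"
    and "distinguishing X l r"
  shows "\<forall>L. linear_extension X P L \<longrightarrow>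
           (\<exists>f. choice_function X l r f \<and> order_of X f = L)"
proof (intro allI impI)
  fix L assume LE: "linear_extension X P L"
  define c where "c = Max (insert 0 (l ` X)) + 1"
  have lc: "\<forall>x\<in>X. l x < c"
  proof
    fix x assume "x \<in> X"
    then have "l x \<le> Max (insert 0 (l ` X))" using assms(1) by (intro Max_ge) auto
    then show "l x < c" unfolding c_def by simp
  qed
  have dist: "\<forall>x\<in>X. \<forall>y\<in>X. x \<noteq> y \<longrightarrow> l x \<noteq> r y"
    using assms(5) unfolding distinguishing_def by blast
  have LP: "\<forall>x\<in>X. \<forall>y\<in>X. r x < l y \<longrightarrow> (x,y)\<in>L"
    using assms(4) LE unfolding interval_rep_def linear_extension_def by blast
  have lr: "\<forall>x\<in>X. l x \<le> r x" using assms(4) unfolding interval_rep_def by blast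
  have sp: "strict_poset X L" using LE unfolding linear_extension_def by blast
  have L1: "L \<subseteq> X \<times> X" using sp unfolding strict_poset_def by blast
  have L2: "\<forall>x\<in>X. (x,x) \<notin> L" using sp unfolding strict_poset_def by blast
  have L3: "\<forall>x\<in>X. \<forall>y\<in>X. \<forall>z\<in>X. (x,y)\<in>L \<longrightarrow> (y,z)\<in>L \<longrightarrow> (x,z)\<in>L"
    using sp unfolding strict_poset_def by blast
  have L4: "\<forall>x\<in>X. \<forall>y\<in>X. x\<noteq>y \<longrightarrow> (x,y)\<in>L \<or> (y,x)\<in>L"
    using LE unfolding linear_extension_def by blast
  obtain f where f: "\<forall>x\<in>X. l x \<le> f x \<and> f x \<le> r x \<and> f x < c" "order_of X f = L"
    using main[OF assms(1) lr dist L1 L2 L3 L4 LP lc] by blast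
  have inj: "inj_on f X"
  proof (rule inj_onI, rule ccontr)
    fix x y assume xy: "x \<in> X" "y \<in> X" "f x = f y" "x \<noteq> y"
    then have "(x, y) \<in> L \<or> (y, x) \<in> L" using LE unfolding linear_extension_def by blast
    then show False using f(2) xy unfolding order_of_def by auto
  qed
  show "\<exists>f. choice_function X l r f \<and> order_of X f = L"
    using f inj unfolding choice_function_def by blast
qed

end
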